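(* Let $\mathbf{G}=(\mathcal{V},\mathcal{E})$ be a directed graph on $\mathcal{V}=\{1,\dots,m\}$, let $a>0$, and let $\{r_{ij}\}_{(i,j)\in\mathcal{E}}$ be independent random variables, each uniform on $[0,ma)$. Define $t_i=\mathrm{mod}\big(\sum_{j:(j,i)\in\mathcal{E}} r_{ji}-\sum_{j:(i,j)\in\mathcal{E}} r_{ij},\,ma\big)$ for $i\in\mathcal{V}$. If the undirected graph $\bar{\mathbf{G}}$ is connected, then the vector $\mathbf{t}=(t_1,\dots,t_m)$ is uniformly distributed over the set of points of $[0,ma)^m$ satisfying $\mathrm{mod}\big(\sum_{i=1}^m t_i, ma\big)=0$.
   Context: $\bar{\mathbf{G}}$ is the undirected graph on $\mathcal{V}$ obtained from $\mathbf{G}$ by ignoring edge orientations. For $a'>0$ and real $y$, $\mathrm{mod}(y,a')=y-pa'$ where $p$ is the unique integer with $y-pa'\in[0,a')$; equivalently $\mathbf{t}=\mathrm{mod}(B\mathbf{r},ma)$ entrywise, with $B$ the incidence matrix of $\mathbf{G}$ and $\mathbf{r}$ the vector of the $r_{ij}$. *)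

theory Defs
  imports "HOL-Probability.Probability"
begin

definition rmod :: "real \<Rightarrow> real \<Rightarrow> real" where
  "rmod y a' = y - of_int \<lfloor>y / a'\<rfloor> * a'"

definition undirected_connected :: "nat set \<Rightarrow> (nat \<times> nat) set \<Rightarrow> bool" where
  "undirected_connected V E \<longleftrightarrow> (\<forall>i\<in>V. \<forall>j\<in>V. (i, j) \<in> (E \<union> E\<inverse>)\<^sup>*)"

definition tvec :: "(nat \<times> nat) set \<Rightarrow> real \<Rightarrow> (nat \<times> nat \<Rightarrow> real) \<Rightarrow> nat \<Rightarrow> real" where
  "tvec E c r i = rmod ((\<Sum>j\<in>{j. (j, i) \<in> E}. r (j, i)) - (\<Sum>j\<in>{j. (i, j) \<in> E}. r (i, j))) c"

text \<open>Uniform distribution on the set {x \<in> [0,c)^m. mod(sum x, c) = 0}, a subset of R^m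
  (coordinates indexed by {1..m}): the natural (normalised surface) measure on this set, realised
  as the image of the uniform distribution on [0,c)^(m-1) under the bijection
  (x_1,...,x_{m-1}) \<mapsto> (x_1,...,x_{m-1}, mod(-(x_1+...+x_{m-1}), c)).\<close>
definition zero_sum_uniform :: "nat \<Rightarrow> real \<Rightarrow> (nat \<Rightarrow> real) measure" where
  "zero_sum_uniform m c =
     distr (PiM {1..<m} (\<lambda>_. uniform_measure lborel {0..<c})) (PiM {1..m} (\<lambda>_. borel))
       (\<lambda>x. \<lambda>i\<in>{1..m}. if i < m then x i else rmod (- (\<Sum>j\<in>{1..<m}. x j)) c)"

end

theory Submission
  imports Defs
begin

abbreviation unif :: "real \<Rightarrow> real measure" where
  "unif c \<equiv> uniform_measure lborel {0..<c}"

lemma sets_unif[measurable_cong, simp]: "sets (unif c) = sets borel"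
  by simp

lemma space_unif[simp]: "space (unif c) = UNIV"
  by (simp add: space_uniform_measure)

lemma prob_unif: "c > 0 \<Longrightarrow> prob_space (unif c)"
  by (intro prob_space_uniform_measure) auto

lemma borel_measurable_rmod[measurable]:
  "f \<in> borel_measurable M \<Longrightarrow> (\<lambda>x. rmod (f x) c) \<in> borel_measurable M"
proof -
  assume f: "f \<in> borel_measurable M"
  have "(\<lambda>x. real_of_int \<lfloor>f x / c\<rfloor>) \<in> borel_measurable M"
    using measurable_compose[OF _ borel_measurable_real_floor, of "\<lambda>x. f x / c"] f by simp
  thus ?thesis unfolding rmod_def using f by measurable
qed

lemma rmod_range: "c > 0 \<Longrightarrow> 0 \<le> rmod y c \<and> rmod y c < c"
proof -
  assume c: "c > 0"
  have a: "of_int \<lfloor>y / c\<rfloor> \<le> y / c" "y / c < of_int \<lfloor>y / c\<rfloor> + 1" by linarith+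
  have "of_int \<lfloor>y / c\<rfloor> * c \<le> y" using a(1) c by (simp only: pos_le_divide_eq)
  moreover have "y < (of_int \<lfloor>y / c\<rfloor> + 1) * c" using a(2) c by (simp only: pos_divide_less_eq)
  ultimately have "of_int \<lfloor>y / c\<rfloor> * c \<le> y" "y < (of_int \<lfloor>y / c\<rfloor> + 1) * c" by auto
  thus ?thesis unfolding rmod_def by (auto simp: algebra_simps)
qed

lemma rmod_id: "0 \<le> y \<Longrightarrow> y < c \<Longrightarrow> rmod y c = y"
proof -
  assume "0 \<le> y" "y < c"
  hence "\<lfloor>y / c\<rfloor> = 0" by (intro floor_unique) auto
  thus ?thesis by (simp add: rmod_def)
qed

lemma rmod_add_int: "c > 0 \<Longrightarrow> rmod (y + of_int k * c) c = rmod y c"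
proof -
  assume c: "c > 0"
  have "(y + of_int k * c) / c = y / c + of_int k" using c by (simp add: field_simps)
  hence "\<lfloor>(y + of_int k * c) / c\<rfloor> = \<lfloor>y / c\<rfloor> + k" by simp
  thus ?thesis by (simp add: rmod_def algebra_simps)
qed

lemma rmod_rmod_add: "c > 0 \<Longrightarrow> rmod (rmod x c + y) c = rmod (x + y) c"
proof -
  assume c: "c > 0"
  have eq: "rmod x c + y = (x + y) + of_int (- \<lfloor>x / c\<rfloor>) * c" by (simp add: rmod_def)
  show ?thesis by (simp only: eq rmod_add_int[OF c])
qed

lemma lborel_preimage_plus:
  assumes "B \<in> sets borel"
  shows "emeasure lborel ((\<lambda>u. u + k) -` B) = emeasure lborel (B::real set)"
proof -
  have "emeasure lborel B = emeasure (distr lborel borel ((+) k)) B"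
    by (simp add: lborel_distr_plus)
  also have "\<dots> = emeasure lborel ((+) k -` B)"
    using assms by (subst emeasure_distr) auto
  also have "(+) k -` B = (\<lambda>u. u + k) -` B" by (auto simp: add.commute)
  finally show ?thesis by simp
qed

lemma lborel_distr_refl: "distr lborel borel (\<lambda>x. k - x) = (lborel :: real measure)"
  by (subst lborel_real_affine[of "-1" k])
     (auto simp: density_1 one_ennreal_def[symmetric])

lemma lborel_preimage_refl:
  assumes "B \<in> sets borel"
  shows "emeasure lborel ((\<lambda>u. k - u) -` B) = emeasure lborel (B::real set)"
proof -
  have "emeasure lborel B = emeasure (distr lborel borel (\<lambda>x. k - x)) B"
    by (simp add: lborel_distr_refl)
  also have "\<dots> = emeasure lborel ((\<lambda>x. k - x) -` B)"
    using assms by (subst emeasure_distr) auto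
  finally show ?thesis by simp
qed

lemma unif_eqI:
  assumes c: "c > 0" and f: "f \<in> borel_measurable borel"
    and eq: "\<And>A. A \<in> sets borel \<Longrightarrow>
       emeasure lborel ({0..<c} \<inter> f -` A) = emeasure lborel ({0..<c} \<inter> A)"
  shows "distr (unif c) borel f = unif c"
proof (rule measure_eqI)
  have fm: "f \<in> measurable (unif c) borel"
    using f measurable_cong_sets[of "unif c" borel borel borel] by simp
  fix A assume A: "A \<in> sets (distr (unif c) borel f)"
  hence A': "A \<in> sets borel" by simp
  have pre: "f -` A \<in> sets lborel"
    using measurable_sets_borel[OF f A'] by simp
  have "emeasure (distr (unif c) borel f) A = emeasure (unif c) (f -` A \<inter> space (unif c))"
    by (rule emeasure_distr[OF fm A'])
  also have "\<dots> = emeasure (unif c) (f -` A)" by simp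
  also have "\<dots> = emeasure lborel ({0..<c} \<inter> f -` A) / emeasure lborel {0..<c}"
    by (rule emeasure_uniform_measure) (use pre in auto)
  also have "\<dots> = emeasure lborel ({0..<c} \<inter> A) / emeasure lborel {0..<c}"
    by (simp only: eq[OF A'])
  also have "\<dots> = emeasure (unif c) A"
    by (rule emeasure_uniform_measure[symmetric]) (use A' in auto)
  finally show "emeasure (distr (unif c) borel f) A = emeasure (unif c) A" .
next
  show "sets (distr (unif c) borel f) = sets (unif c)" by simp
qed

lemma rmod_cases:
  assumes c: "c > 0" and "0 \<le> x" "x < 2 * c"
  shows "rmod x c = (if x < c then x else x - c)"
proof (cases "x < c")
  case True thus ?thesis using assms by (simp add: rmod_id)
next
  case False
  have "rmod x c = rmod ((x - c) + of_int 1 * c) c" by simp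
  also have "\<dots> = rmod (x - c) c" by (rule rmod_add_int[OF c])
  also have "\<dots> = x - c" using False assms by (intro rmod_id) auto
  finally show ?thesis using False by simp
qed

lemma unif_shift:
  assumes c: "c > 0"
  shows "distr (unif c) borel (\<lambda>u. rmod (u + s) c) = unif c"
proof -
  define s' where "s' = rmod s c"
  have s': "0 \<le> s'" "s' < c" using rmod_range[OF c] s'_def by auto
  have feq: "(\<lambda>u. rmod (u + s) c) = (\<lambda>u. rmod (u + s') c)"
    using rmod_rmod_add[OF c, of s] by (auto simp: s'_def add.commute)
  show ?thesis unfolding feq
  proof (rule unif_eqI[OF c])
    show "(\<lambda>u. rmod (u + s') c) \<in> borel_measurable borel" by measurable
  next
    fix A :: "real set" assume A: "A \<in> sets borel"
    have seteq: "{0..<c} \<inter> (\<lambda>u. rmod (u + s') c) -` A =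
      (\<lambda>u. u + s') -` (A \<inter> {s'..<c}) \<union> (\<lambda>u. u + (s' - c)) -` (A \<inter> {0..<s'})"
    proof (intro set_eqI iffI)
      fix u assume u: "u \<in> {0..<c} \<inter> (\<lambda>u. rmod (u + s') c) -` A"
      hence r: "rmod (u + s') c = (if u + s' < c then u + s' else u + s' - c)"
        using s' by (intro rmod_cases[OF c]) auto
      show "u \<in> (\<lambda>u. u + s') -` (A \<inter> {s'..<c}) \<union> (\<lambda>u. u + (s' - c)) -` (A \<inter> {0..<s'})"
        using u r s' by (auto simp: add_diff_eq split: if_splits)
    next
      fix u assume u: "u \<in> (\<lambda>u. u + s') -` (A \<inter> {s'..<c}) \<union> (\<lambda>u. u + (s' - c)) -` (A \<inter> {0..<s'})"
      hence u': "0 \<le> u" "u < c" using s' by auto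
      hence r: "rmod (u + s') c = (if u + s' < c then u + s' else u + s' - c)"
        using s' by (intro rmod_cases[OF c]) auto
      show "u \<in> {0..<c} \<inter> (\<lambda>u. rmod (u + s') c) -` A"
        using u u' r s' by (auto simp: add_diff_eq split: if_splits)
    qed
    have m1: "(\<lambda>u. u + s') -` (A \<inter> {s'..<c}) \<in> sets lborel"
      using measurable_sets_borel[of "\<lambda>u. u + s'" borel "A \<inter> {s'..<c}"] A by simp
    have m2: "(\<lambda>u. u + (s' - c)) -` (A \<inter> {0..<s'}) \<in> sets lborel"
      using measurable_sets_borel[of "\<lambda>u. u + (s' - c)" borel "A \<inter> {0..<s'}"] A by simp
    have disj: "(\<lambda>u. u + s') -` (A \<inter> {s'..<c}) \<inter> (\<lambda>u. u + (s' - c)) -` (A \<inter> {0..<s'}) = {}"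
      by auto
    have "emeasure lborel ({0..<c} \<inter> (\<lambda>u. rmod (u + s') c) -` A)
        = emeasure lborel ((\<lambda>u. u + s') -` (A \<inter> {s'..<c})) + emeasure lborel ((\<lambda>u. u + (s' - c)) -` (A \<inter> {0..<s'}))"
      unfolding seteq by (rule plus_emeasure[OF m1 m2 disj, symmetric])
    also have "\<dots> = emeasure lborel (A \<inter> {s'..<c}) + emeasure lborel (A \<inter> {0..<s'})"
      using lborel_preimage_plus[of "A \<inter> {s'..<c}" s'] lborel_preimage_plus[of "A \<inter> {0..<s'}" "s' - c"] A by simp
    also have "\<dots> = emeasure lborel (A \<inter> {s'..<c} \<union> A \<inter> {0..<s'})"
      using A by (intro plus_emeasure) auto
    also have "A \<inter> {s'..<c} \<union> A \<inter> {0..<s'} = {0..<c} \<inter> A" using s' by auto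
    finally show "emeasure lborel ({0..<c} \<inter> (\<lambda>u. rmod (u + s') c) -` A) = emeasure lborel ({0..<c} \<inter> A)" .
  qed
qed

lemma unif_refl:
  assumes c: "c > 0"
  shows "distr (unif c) borel (\<lambda>u. rmod (- u) c) = unif c"
proof (rule unif_eqI[OF c])
  show "(\<lambda>u. rmod (- u) c) \<in> borel_measurable borel" by measurable
next
  fix A :: "real set" assume A: "A \<in> sets borel"
  have r: "rmod (- u) c = (if u = 0 then 0 else c - u)" if "0 \<le> u" "u < c" for u
  proof (cases "u = 0")
    case True thus ?thesis by (simp add: rmod_def)
  next
    case False
    have "rmod (- u) c = rmod ((c - u) + of_int (-1) * c) c" by simp
    also have "\<dots> = rmod (c - u) c" by (rule rmod_add_int[OF c])
    also have "\<dots> = c - u" using False that by (intro rmod_id) auto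
    finally show ?thesis using False by simp
  qed
  define B where "B = (\<lambda>u. c - u) -` (A \<inter> {0<..<c})"
  define Z where "Z = (if 0 \<in> A then {0::real} else {})"
  have seteq: "{0..<c} \<inter> (\<lambda>u. rmod (- u) c) -` A = B \<union> Z"
  proof (intro set_eqI iffI)
    fix u assume u: "u \<in> {0..<c} \<inter> (\<lambda>u. rmod (- u) c) -` A"
    thus "u \<in> B \<union> Z" using r[of u] by (auto simp: B_def Z_def split: if_splits)
  next
    fix u assume u: "u \<in> B \<union> Z"
    hence u': "0 \<le> u" "u < c" using c by (auto simp: B_def Z_def split: if_splits)
    show "u \<in> {0..<c} \<inter> (\<lambda>u. rmod (- u) c) -` A"
      using u u' r[OF u'] by (auto simp: B_def Z_def split: if_splits)
  qed
  have Bm: "B \<in> sets lborel"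
    using measurable_sets_borel[of "\<lambda>u. c - u" borel "A \<inter> {0<..<c}"] A by (simp add: B_def)
  have Zn: "Z \<in> null_sets lborel" by (simp add: Z_def finite_imp_null_set_lborel)
  have Z2: "A \<inter> {0} \<in> null_sets lborel"
    by (rule null_sets_subset[of "{0}"]) (use A in \<open>auto simp: finite_imp_null_set_lborel\<close>)
  have "emeasure lborel ({0..<c} \<inter> (\<lambda>u. rmod (- u) c) -` A) = emeasure lborel B"
    unfolding seteq by (rule emeasure_Un_null_set[OF Bm Zn])
  also have "\<dots> = emeasure lborel (A \<inter> {0<..<c})"
    unfolding B_def using lborel_preimage_refl[of "A \<inter> {0<..<c}" c] A by simp
  also have "\<dots> = emeasure lborel (A \<inter> {0<..<c} \<union> A \<inter> {0})"
    using A by (intro emeasure_Un_null_set[symmetric] Z2) auto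
  also have "A \<inter> {0<..<c} \<union> A \<inter> {0} = {0..<c} \<inter> A" using c by auto
  finally show "emeasure lborel ({0..<c} \<inter> (\<lambda>u. rmod (- u) c) -` A) = emeasure lborel ({0..<c} \<inter> A)" .
qed

lemma unif_plus:
  assumes c: "c > 0"
  shows "distr (unif c) (unif c) (\<lambda>u. rmod (u + g) c) = unif c"
  using unif_shift[OF c, of g] by (metis distr_cong sets_unif)

lemma unif_minus:
  assumes c: "c > 0"
  shows "distr (unif c) (unif c) (\<lambda>u. rmod (- u + g) c) = unif c"
proof -
  have feq: "(\<lambda>u. rmod (- u + g) c) = (\<lambda>u. rmod (u + g) c) \<circ> (\<lambda>u. rmod (- u) c)"
    using rmod_rmod_add[OF c] by (auto simp: fun_eq_iff)
  have "distr (unif c) (unif c) (\<lambda>u. rmod (- u + g) c) = distr (unif c) borel ((\<lambda>u. rmod (u + g) c) \<circ> (\<lambda>u. rmod (- u) c))"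
    unfolding feq by (rule distr_cong) auto
  also have "\<dots> = distr (distr (unif c) borel (\<lambda>u. rmod (- u) c)) borel (\<lambda>u. rmod (u + g) c)"
    by (rule distr_distr[symmetric]) (auto simp: measurable_cong_sets[of "unif c" borel borel borel])
  also have "\<dots> = unif c" unfolding unif_refl[OF c] by (rule unif_shift[OF c])
  finally show ?thesis .
qed

lemma fib_pres:
  assumes K: "prob_space K" and N: "prob_space N"
    and fm: "(\<lambda>(x,y). f y x) \<in> measurable (K \<Otimes>\<^sub>M N) K"
    and fy: "\<And>y. y \<in> space N \<Longrightarrow> distr K K (f y) = K"
  shows "distr (K \<Otimes>\<^sub>M N) (K \<Otimes>\<^sub>M N) (\<lambda>(x,y). (f y x, y)) = K \<Otimes>\<^sub>M N"
proof -
  interpret K: prob_space K by fact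
  interpret N: prob_space N by fact
  interpret pair_sigma_finite K N ..
  have geq: "(\<lambda>(x,y). (f y x, y)) = (\<lambda>p. ((\<lambda>(x,y). f y x) p, snd p))" by auto
  have gm: "(\<lambda>(x,y). (f y x, y)) \<in> measurable (K \<Otimes>\<^sub>M N) (K \<Otimes>\<^sub>M N)"
    unfolding geq by (intro measurable_Pair fm measurable_snd)
  have fym: "f y \<in> measurable K K" if "y \<in> space N" for y
  proof -
    have "(\<lambda>x. (\<lambda>(x,y). f y x) (x, y)) \<in> measurable K K"
      by (rule measurable_compose[OF measurable_Pair2'[OF that] fm])
    thus ?thesis by simp
  qed
  have "K \<Otimes>\<^sub>M N = distr (K \<Otimes>\<^sub>M N) (K \<Otimes>\<^sub>M N) (\<lambda>(x,y). (f y x, y))"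
  proof (rule pair_measure_eqI)
    show "sigma_finite_measure K" "sigma_finite_measure N" by unfold_locales
    show "sets (K \<Otimes>\<^sub>M N) = sets (distr (K \<Otimes>\<^sub>M N) (K \<Otimes>\<^sub>M N) (\<lambda>(x, y). (f y x, y)))" by simp
  next
    fix A B assume A: "A \<in> sets K" and B: "B \<in> sets N"
    let ?g = "\<lambda>(x,y). (f y x, y)"
    let ?P = "?g -` (A \<times> B) \<inter> space (K \<Otimes>\<^sub>M N)"
    have AB: "A \<times> B \<in> sets (K \<Otimes>\<^sub>M N)" using A B by auto
    have P: "?P \<in> sets (K \<Otimes>\<^sub>M N)" by (rule measurable_sets[OF gm AB])
    have "emeasure (distr (K \<Otimes>\<^sub>M N) (K \<Otimes>\<^sub>M N) ?g) (A \<times> B) = emeasure (K \<Otimes>\<^sub>M N) ?P"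
      by (rule emeasure_distr[OF gm AB])
    also have "\<dots> = (\<integral>\<^sup>+y. emeasure K ((\<lambda>x. (x, y)) -` ?P) \<partial>N)"
      by (rule emeasure_pair_measure_alt2[OF P])
    also have "\<dots> = (\<integral>\<^sup>+y. emeasure K A * indicator B y \<partial>N)"
    proof (rule nn_integral_cong)
      fix y assume y: "y \<in> space N"
      show "emeasure K ((\<lambda>x. (x, y)) -` ?P) = emeasure K A * indicator B y"
      proof (cases "y \<in> B")
        case True
        have "(\<lambda>x. (x, y)) -` ?P = f y -` A \<inter> space K" using y True by (auto simp: space_pair_measure)
        hence "emeasure K ((\<lambda>x. (x, y)) -` ?P) = emeasure (distr K K (f y)) A"
          using A by (simp add: emeasure_distr[OF fym[OF y] A])
        also have "\<dots> = emeasure K A" using fy[OF y] by simp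
        finally show ?thesis using True by simp
      next
        case False
        hence "(\<lambda>x. (x, y)) -` ?P = {}" by auto
        thus ?thesis using False by simp
      qed
    qed
    also have "\<dots> = emeasure K A * emeasure N B"
      using B by (simp add: nn_integral_cmult_indicator)
    finally show "emeasure K A * emeasure N B = emeasure (distr (K \<Otimes>\<^sub>M N) (K \<Otimes>\<^sub>M N) ?g) (A \<times> B)" by simp
  qed
  thus ?thesis by simp
qed

lemma distr_PiM_empty:
  assumes "prob_space M"
  shows "distr M (PiM {} N) (\<lambda>x. \<lambda>w\<in>{}. h w x) = PiM {} N'"
proof -
  interpret prob_space M by fact
  have eq: "(\<lambda>x. \<lambda>w\<in>{}. h w x) = (\<lambda>_. (\<lambda>_. undefined))" by (simp add: fun_eq_iff restrict_def)
  show ?thesis unfolding eq PiM_empty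
  proof (rule measure_eqI)
    show "sets (distr M (count_space {\<lambda>_. undefined}) (\<lambda>_ _. undefined)) = sets (count_space {\<lambda>_. undefined})"
      by simp
  next
    fix A assume "A \<in> sets (distr M (count_space {\<lambda>_. undefined}) (\<lambda>_ _. undefined))"
    hence A: "A \<subseteq> {\<lambda>_. undefined}" by simp
    hence "A = {} \<or> A = {\<lambda>_. undefined}" by auto
    thus "emeasure (distr M (count_space {\<lambda>_. undefined}) (\<lambda>_ _. undefined)) A = emeasure (count_space {\<lambda>_. undefined}) A"
      by (auto simp: emeasure_distr emeasure_space_1)
  qed
qed

definition dsum :: "(nat \<times> nat) set \<Rightarrow> (nat \<times> nat \<Rightarrow> real) \<Rightarrow> nat \<Rightarrow> real" where
  "dsum E x i = (\<Sum>j\<in>{j. (j, i) \<in> E}. x (j, i)) - (\<Sum>j\<in>{j. (i, j) \<in> E}. x (i, j))"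

lemma tvec_dsum: "tvec E c x i = rmod (dsum E x i) c"
  by (simp add: tvec_def dsum_def)

lemma dsum_meas:
  assumes N: "sets N = sets borel"
  shows "(\<lambda>x. dsum E x w) \<in> borel_measurable (PiM E (\<lambda>_. N))"
proof -
  have comp: "(\<lambda>x. x e) \<in> borel_measurable (PiM E (\<lambda>_. N))" if "e \<in> E" for e
    by (subst measurable_cong_sets[OF refl N, symmetric]) (rule measurable_component_singleton[OF that])
  show ?thesis unfolding dsum_def
    by (intro borel_measurable_diff borel_measurable_sum) (auto intro: comp)
qed

lemma tvec_meas:
  assumes N: "sets N = sets borel"
  shows "(\<lambda>x. tvec E c x w) \<in> borel_measurable (PiM E (\<lambda>_. N))"
  unfolding tvec_dsum by (intro borel_measurable_rmod dsum_meas N)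

lemma dsum_cong: "(\<And>e. e \<in> E \<Longrightarrow> x e = y e) \<Longrightarrow> dsum E x i = dsum E y i"
  unfolding dsum_def by (intro arg_cong2[where f="(-)"] sum.cong) auto

lemma fin_in: "finite E \<Longrightarrow> finite {j. (j, w) \<in> E}"
  by (rule finite_subset[of _ "fst ` E"]) force+

lemma fin_out: "finite E \<Longrightarrow> finite {j. (w, j) \<in> E}"
  by (rule finite_subset[of _ "snd ` E"]) force+

lemma dsum_upd:
  assumes E: "finite E" "(a, b) \<in> E" "a \<noteq> b"
  shows "dsum E (y((a,b) := u)) w = dsum (E - {(a,b)}) y w + (if w = b then u else 0) - (if w = a then u else 0)"
proof -
  let ?E' = "E - {(a,b)}"
  have in_eq: "(\<Sum>j\<in>{j. (j, w) \<in> E}. (y((a,b) := u)) (j, w)) = (\<Sum>j\<in>{j. (j, w) \<in> ?E'}. y (j, w)) + (if w = b then u else 0)"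
  proof (cases "w = b")
    case True
    have "{j. (j, w) \<in> E} = insert a {j. (j, w) \<in> ?E'}" using True E by auto
    moreover have "a \<notin> {j. (j, w) \<in> ?E'}" using True by auto
    moreover have "finite {j. (j, w) \<in> ?E'}" by (rule finite_subset[OF _ fin_in[OF E(1)]]) auto
    ultimately have "(\<Sum>j\<in>{j. (j, w) \<in> E}. (y((a,b) := u)) (j, w)) = u + (\<Sum>j\<in>{j. (j, w) \<in> ?E'}. (y((a,b) := u)) (j, w))"
      using True by simp
    also have "(\<Sum>j\<in>{j. (j, w) \<in> ?E'}. (y((a,b) := u)) (j, w)) = (\<Sum>j\<in>{j. (j, w) \<in> ?E'}. y (j, w))"
      by (intro sum.cong) auto
    finally show ?thesis using True by simp
  next
    case False
    have "{j. (j, w) \<in> E} = {j. (j, w) \<in> ?E'}" using False by auto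
    moreover have "(\<Sum>j\<in>{j. (j, w) \<in> ?E'}. (y((a,b) := u)) (j, w)) = (\<Sum>j\<in>{j. (j, w) \<in> ?E'}. y (j, w))"
      by (intro sum.cong) auto
    ultimately show ?thesis using False by simp
  qed
  have out_eq: "(\<Sum>j\<in>{j. (w, j) \<in> E}. (y((a,b) := u)) (w, j)) = (\<Sum>j\<in>{j. (w, j) \<in> ?E'}. y (w, j)) + (if w = a then u else 0)"
  proof (cases "w = a")
    case True
    have "{j. (w, j) \<in> E} = insert b {j. (w, j) \<in> ?E'}" using True E by auto
    moreover have "b \<notin> {j. (w, j) \<in> ?E'}" using True by auto
    moreover have "finite {j. (w, j) \<in> ?E'}" by (rule finite_subset[OF _ fin_out[OF E(1)]]) auto
    ultimately have "(\<Sum>j\<in>{j. (w, j) \<in> E}. (y((a,b) := u)) (w, j)) = u + (\<Sum>j\<in>{j. (w, j) \<in> ?E'}. (y((a,b) := u)) (w, j))"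
      using True by simp
    also have "(\<Sum>j\<in>{j. (w, j) \<in> ?E'}. (y((a,b) := u)) (w, j)) = (\<Sum>j\<in>{j. (w, j) \<in> ?E'}. y (w, j))"
      by (intro sum.cong) auto
    finally show ?thesis using True by simp
  next
    case False
    have "{j. (w, j) \<in> E} = {j. (w, j) \<in> ?E'}" using False by auto
    moreover have "(\<Sum>j\<in>{j. (w, j) \<in> ?E'}. (y((a,b) := u)) (w, j)) = (\<Sum>j\<in>{j. (w, j) \<in> ?E'}. y (w, j))"
      by (intro sum.cong) auto
    ultimately show ?thesis using False by simp
  qed
  show ?thesis unfolding dsum_def in_eq out_eq by simp
qed

definition Qc :: "nat set \<Rightarrow> (nat \<times> nat) set \<Rightarrow> bool" where
  "Qc S E \<longleftrightarrow> (\<forall>K\<subseteq>S. K \<noteq> {} \<longrightarrow> (\<exists>v\<in>K. \<exists>p. p \<notin> K \<and> ((v, p) \<in> E \<or> (p, v) \<in> E)))"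

lemma Qc_step:
  assumes "Qc S E" "v \<in> S" "p \<notin> S" "e = (v, p) \<or> e = (p, v)"
  shows "Qc (S - {v}) (E - {e})"
  unfolding Qc_def
proof (intro allI impI)
  fix K assume K: "K \<subseteq> S - {v}" "K \<noteq> {}"
  then obtain v' p' where vp: "v' \<in> K" "p' \<notin> K" "(v', p') \<in> E \<or> (p', v') \<in> E"
    using assms(1) unfolding Qc_def by blast
  have "v' \<noteq> v" "v' \<noteq> p" using vp K assms by auto
  hence "(v', p') \<noteq> e" "(p', v') \<noteq> e" using assms(4) by auto
  thus "\<exists>v\<in>K. \<exists>p. p \<notin> K \<and> ((v, p) \<in> E - {e} \<or> (p, v) \<in> E - {e})"
    using vp by blast
qed

lemma main:
  assumes c: "c > 0"
  shows "finite S \<Longrightarrow> finite E \<Longrightarrow> Qc S E \<Longrightarrow>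
    distr (PiM E (\<lambda>_. unif c)) (PiM S (\<lambda>_. borel)) (\<lambda>x. \<lambda>w\<in>S. tvec E c x w) = PiM S (\<lambda>_. unif c)"
proof (induction "card S" arbitrary: S E)
  case 0
  hence S0: "S = {}" by simp
  have pr: "prob_space (PiM E (\<lambda>_. unif c))" by (intro prob_space_PiM prob_unif c)
  show ?case unfolding S0 by (rule distr_PiM_empty[OF pr])
next
  case (Suc n S E)
  let ?U = "unif c"
  have probU: "prob_space ?U" by (rule prob_unif[OF c])
  have "S \<noteq> {}" using Suc.hyps(2) by auto
  then obtain v p where v: "v \<in> S" "p \<notin> S" "(v, p) \<in> E \<or> (p, v) \<in> E"
    using Suc.prems(3) unfolding Qc_def by blast
  then obtain a b where ab: "(a, b) \<in> E" "(a = v \<and> b = p) \<or> (a = p \<and> b = v)" by blast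
  have vp: "v \<noteq> p" using v by auto
  hence aneb: "a \<noteq> b" using ab by auto
  define e where "e = (a, b)"
  define E' where "E' = E - {e}"
  define S' where "S' = S - {v}"
  have eE: "e \<in> E" "insert e E' = E" using ab by (auto simp: e_def E'_def)
  have vS: "insert v S' = S" using v by (auto simp: S'_def)
  have e_or: "e = (v, p) \<or> e = (p, v)" using ab by (auto simp: e_def)
  have finS': "finite S'" "finite E'" using Suc.prems by (auto simp: S'_def E'_def)
  have cardS': "n = card S'" using Suc.hyps(2) Suc.prems(1) v by (simp add: S'_def)
  have QS': "Qc S' E'" unfolding S'_def E'_def by (rule Qc_step[OF Suc.prems(3) v(1,2) e_or])
  define \<Phi>' where "\<Phi>' = (\<lambda>y. \<lambda>w\<in>S'. tvec E' c y w)"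
  have IH: "distr (PiM E' (\<lambda>_. ?U)) (PiM S' (\<lambda>_. borel)) \<Phi>' = PiM S' (\<lambda>_. ?U)"
    unfolding \<Phi>'_def by (rule Suc.hyps(1)[OF cardS' finS' QS'])
  define G where "G = (\<lambda>y. dsum E' y v)"
  define fv where "fv = (\<lambda>y u. rmod ((if b = v then u else - u) + G y) c)"
  have key: "(\<lambda>w\<in>S. tvec E c (y(e := u)) w) = (\<Phi>' y)(v := fv y u)" for y u
  proof (rule ext)
    fix w
    have d: "dsum E (y(e := u)) w = dsum E' y w + (if w = b then u else 0) - (if w = a then u else 0)"
      unfolding e_def E'_def by (rule dsum_upd[OF Suc.prems(2) ab(1) aneb])
    show "(\<lambda>w\<in>S. tvec E c (y(e := u)) w) w = ((\<Phi>' y)(v := fv y u)) w"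
    proof (cases "w = v")
      case True
      have dv: "dsum E (y(e := u)) v = (if b = v then u else - u) + dsum E' y v"
        using d True ab vp by auto
      show ?thesis using v(1) True unfolding tvec_dsum fv_def G_def by (simp add: dv)
    next
      case False
      hence "w \<noteq> a" "w \<noteq> b" if "w \<in> S" using ab v that by auto
      thus ?thesis using False d unfolding tvec_dsum \<Phi>'_def S'_def by auto
    qed
  qed
  let ?\<Omega>' = "PiM E' (\<lambda>_. ?U)"
  let ?X = "PiM S (\<lambda>_. borel) :: (nat \<Rightarrow> real) measure"
  have prob\<Omega>': "prob_space ?\<Omega>'" by (intro prob_space_PiM probU)
  have split: "distr (?U \<Otimes>\<^sub>M ?\<Omega>') (PiM E (\<lambda>_. ?U)) (\<lambda>(x, X). X(e := x)) = PiM E (\<lambda>_. ?U)"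
    using distr_pair_PiM_eq_PiM[of E' "\<lambda>_. ?U" e] probU eE(2) by simp
  have ins_m: "(\<lambda>(x, X). X(e := x)) \<in> measurable (?U \<Otimes>\<^sub>M ?\<Omega>') (PiM E (\<lambda>_. ?U))"
  proof -
    have "(\<lambda>p. (snd p)(e := fst p)) \<in> measurable (?U \<Otimes>\<^sub>M ?\<Omega>') (PiM E (\<lambda>_. ?U))"
      by (rule measurable_fun_upd[where J = E']) (use eE(2) in auto)
    moreover have "(\<lambda>(x, X). X(e := x)) = (\<lambda>p. (snd p)(e := fst p))" by auto
    ultimately show ?thesis by simp
  qed
  have PhiE_m: "(\<lambda>x. \<lambda>w\<in>S. tvec E c x w) \<in> measurable (PiM E (\<lambda>_. ?U)) ?X"
    by (intro measurable_restrict tvec_meas) simp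
  have Phi'_m: "\<Phi>' \<in> measurable ?\<Omega>' (PiM S' (\<lambda>_. borel))"
    unfolding \<Phi>'_def by (intro measurable_restrict tvec_meas) simp
  have G_m: "G \<in> borel_measurable ?\<Omega>'"
    unfolding G_def by (intro dsum_meas) simp
  have fv_m: "(\<lambda>(x, y). fv y x) \<in> measurable (?U \<Otimes>\<^sub>M ?\<Omega>') ?U"
  proof -
    have "(\<lambda>(x, y). fv y x) \<in> borel_measurable (?U \<Otimes>\<^sub>M ?\<Omega>')"
      unfolding fv_def using G_m by measurable
    thus ?thesis by (subst measurable_cong_sets[OF refl sets_unif])
  qed
  define J where "J = (\<lambda>(t::real, y). (\<Phi>' y)(v := t))"
  define tr where "tr = (\<lambda>(x, y). (fv y x, y))"
  define hh where "hh = (\<lambda>(t::real, y). (t, \<Phi>' y))"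
  define jn where "jn = (\<lambda>(t::real, z). (z :: nat \<Rightarrow> real)(v := t))"
  have tr_m: "tr \<in> measurable (?U \<Otimes>\<^sub>M ?\<Omega>') (?U \<Otimes>\<^sub>M ?\<Omega>')"
  proof -
    have "(\<lambda>p. ((\<lambda>(x, y). fv y x) p, snd p)) \<in> measurable (?U \<Otimes>\<^sub>M ?\<Omega>') (?U \<Otimes>\<^sub>M ?\<Omega>')"
      by (intro measurable_Pair fv_m measurable_snd)
    moreover have "tr = (\<lambda>p. ((\<lambda>(x, y). fv y x) p, snd p))" by (auto simp: tr_def)
    ultimately show ?thesis by simp
  qed
  have hh_m: "hh \<in> measurable (?U \<Otimes>\<^sub>M ?\<Omega>') (?U \<Otimes>\<^sub>M PiM S' (\<lambda>_. borel))"
  proof -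
    have "(\<lambda>p. (fst p, \<Phi>' (snd p))) \<in> measurable (?U \<Otimes>\<^sub>M ?\<Omega>') (?U \<Otimes>\<^sub>M PiM S' (\<lambda>_. borel))"
      by (intro measurable_Pair measurable_fst measurable_compose[OF measurable_snd Phi'_m])
    moreover have "hh = (\<lambda>p. (fst p, \<Phi>' (snd p)))" by (auto simp: hh_def)
    ultimately show ?thesis by simp
  qed
  have jn_m: "jn \<in> measurable (?U \<Otimes>\<^sub>M PiM S' (\<lambda>_. borel)) ?X"
  proof -
    have fm: "fst \<in> measurable (?U \<Otimes>\<^sub>M PiM S' (\<lambda>_. borel)) borel"
      by (subst measurable_cong_sets[OF refl sets_unif[symmetric]]) (rule measurable_fst)
    have "(\<lambda>p. (snd p)(v := fst p)) \<in> measurable (?U \<Otimes>\<^sub>M PiM S' (\<lambda>_. borel)) (PiM S (\<lambda>_. borel))"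
      by (rule measurable_fun_upd[where J = S']) (use vS fm in auto)
    moreover have "jn = (\<lambda>p. (snd p)(v := fst p))" by (auto simp: jn_def)
    ultimately show ?thesis by simp
  qed
  have J_eq: "J = jn \<circ> hh" by (auto simp: J_def jn_def hh_def)
  have J_m: "J \<in> measurable (?U \<Otimes>\<^sub>M ?\<Omega>') ?X"
    unfolding J_eq by (rule measurable_comp[OF hh_m jn_m])
  have comp_eq: "(\<lambda>x. \<lambda>w\<in>S. tvec E c x w) \<circ> (\<lambda>(x, X). X(e := x)) = J \<circ> tr"
    by (auto simp: key J_def tr_def)
  have "distr (PiM E (\<lambda>_. ?U)) ?X (\<lambda>x. \<lambda>w\<in>S. tvec E c x w)
      = distr (distr (?U \<Otimes>\<^sub>M ?\<Omega>') (PiM E (\<lambda>_. ?U)) (\<lambda>(x, X). X(e := x))) ?X (\<lambda>x. \<lambda>w\<in>S. tvec E c x w)"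
    by (simp only: split)
  also have "\<dots> = distr (?U \<Otimes>\<^sub>M ?\<Omega>') ?X (J \<circ> tr)"
    by (simp only: distr_distr[OF PhiE_m ins_m] comp_eq)
  also have "\<dots> = distr (distr (?U \<Otimes>\<^sub>M ?\<Omega>') (?U \<Otimes>\<^sub>M ?\<Omega>') tr) ?X J"
    by (simp only: distr_distr[OF J_m tr_m])
  also have "distr (?U \<Otimes>\<^sub>M ?\<Omega>') (?U \<Otimes>\<^sub>M ?\<Omega>') tr = ?U \<Otimes>\<^sub>M ?\<Omega>'"
    unfolding tr_def
  proof (rule fib_pres[OF probU prob\<Omega>' fv_m])
    fix y
    show "distr ?U ?U (fv y) = ?U"
    proof (cases "b = v")
      case True
      thus ?thesis using unif_plus[OF c, of "G y"] by (simp add: fv_def)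
    next
      case False
      thus ?thesis using unif_minus[OF c, of "G y"] by (simp add: fv_def)
    qed
  qed
  also have "distr (?U \<Otimes>\<^sub>M ?\<Omega>') ?X J = distr (distr (?U \<Otimes>\<^sub>M ?\<Omega>') (?U \<Otimes>\<^sub>M PiM S' (\<lambda>_. borel)) hh) ?X jn"
    unfolding J_eq by (rule distr_distr[OF jn_m hh_m, symmetric])
  also have "distr (?U \<Otimes>\<^sub>M ?\<Omega>') (?U \<Otimes>\<^sub>M PiM S' (\<lambda>_. borel)) hh
      = distr ?U ?U (\<lambda>x. x) \<Otimes>\<^sub>M distr ?\<Omega>' (PiM S' (\<lambda>_. borel)) \<Phi>'"
    unfolding hh_def
    by (rule pair_measure_distr[symmetric, OF measurable_ident_sets[OF refl] Phi'_m])
       (simp add: IH prob_space_imp_sigma_finite prob_space_PiM probU)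
  also have "\<dots> = ?U \<Otimes>\<^sub>M PiM S' (\<lambda>_. ?U)" by (simp add: IH)
  also have "distr (?U \<Otimes>\<^sub>M PiM S' (\<lambda>_. ?U)) ?X jn = distr (?U \<Otimes>\<^sub>M PiM S' (\<lambda>_. ?U)) (PiM (insert v S') (\<lambda>_. ?U)) jn"
    by (rule distr_cong) (auto simp: vS intro!: sets_PiM_cong)
  also have "\<dots> = PiM (insert v S') (\<lambda>_. ?U)"
    unfolding jn_def using distr_pair_PiM_eq_PiM[of S' "\<lambda>_. ?U" v] probU by simp
  finally show ?case by (simp only: vS)
qed

lemma conn_Qc:
  assumes E: "E \<subseteq> V \<times> V" and conn: "undirected_connected V E" and rho: "\<rho> \<in> V"
  shows "Qc (V - {\<rho>}) E"
  unfolding Qc_def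
proof (intro allI impI)
  fix K assume K: "K \<subseteq> V - {\<rho>}" "K \<noteq> {}"
  show "\<exists>v\<in>K. \<exists>p. p \<notin> K \<and> ((v, p) \<in> E \<or> (p, v) \<in> E)"
  proof (rule ccontr)
    assume H: "\<not> ?thesis"
    obtain w where w: "w \<in> K" using K by auto
    have "(\<rho>, w) \<in> (E \<union> E\<inverse>)\<^sup>*" using conn rho w K unfolding undirected_connected_def by auto
    moreover have "z \<notin> K" if "(\<rho>, z) \<in> (E \<union> E\<inverse>)\<^sup>*" for z
      using that
    proof (induction rule: rtrancl_induct)
      case base thus ?case using K by auto
    next
      case (step y z)
      thus ?case using H by auto
    qed
    ultimately show False using w by auto
  qed
qed

lemma in_total:
  assumes "finite V" "E \<subseteq> V \<times> V"
  shows "(\<Sum>i\<in>V. \<Sum>j\<in>{j. (j, i) \<in> E}. x (j, i)) = sum x E"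
proof -
  have finE: "finite E" using assms finite_subset[of E "V \<times> V"] by auto
  have "sum x E = (\<Sum>i\<in>V. \<Sum>e\<in>{e. e \<in> E \<and> snd e = i}. x e)"
    by (rule sum.group[symmetric]) (use finE assms in auto)
  also have "\<dots> = (\<Sum>i\<in>V. \<Sum>j\<in>{j. (j, i) \<in> E}. x (j, i))"
  proof (rule sum.cong[OF refl])
    fix i
    have "{e. e \<in> E \<and> snd e = i} = (\<lambda>j. (j, i)) ` {j. (j, i) \<in> E}" by force
    moreover have "inj_on (\<lambda>j. (j, i)) {j. (j, i) \<in> E}" by (auto simp: inj_on_def)
    ultimately show "(\<Sum>e\<in>{e. e \<in> E \<and> snd e = i}. x e) = (\<Sum>j\<in>{j. (j, i) \<in> E}. x (j, i))"
      by (simp add: sum.reindex)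
  qed
  finally show ?thesis by simp
qed

lemma out_total:
  assumes "finite V" "E \<subseteq> V \<times> V"
  shows "(\<Sum>i\<in>V. \<Sum>j\<in>{j. (i, j) \<in> E}. x (i, j)) = sum x E"
proof -
  have finE: "finite E" using assms finite_subset[of E "V \<times> V"] by auto
  have "sum x E = (\<Sum>i\<in>V. \<Sum>e\<in>{e. e \<in> E \<and> fst e = i}. x e)"
    by (rule sum.group[symmetric]) (use finE assms in auto)
  also have "\<dots> = (\<Sum>i\<in>V. \<Sum>j\<in>{j. (i, j) \<in> E}. x (i, j))"
  proof (rule sum.cong[OF refl])
    fix i
    have "{e. e \<in> E \<and> fst e = i} = (\<lambda>j. (i, j)) ` {j. (i, j) \<in> E}" by force
    moreover have "inj_on (\<lambda>j. (i, j)) {j. (i, j) \<in> E}" by (auto simp: inj_on_def)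
    ultimately show "(\<Sum>e\<in>{e. e \<in> E \<and> fst e = i}. x e) = (\<Sum>j\<in>{j. (i, j) \<in> E}. x (i, j))"
      by (simp add: sum.reindex)
  qed
  finally show ?thesis by simp
qed

lemma dsum_total:
  assumes "finite V" "E \<subseteq> V \<times> V"
  shows "(\<Sum>i\<in>V. dsum E x i) = 0"
  unfolding dsum_def sum_subtractf in_total[OF assms] out_total[OF assms] by simp

lemma tvec_last:
  assumes c: "c > 0" and m: "m \<ge> 1" and E: "E \<subseteq> {1..m} \<times> {1..m}"
  shows "tvec E c x m = rmod (- (\<Sum>j\<in>{1..<m}. tvec E c x j)) c"
proof -
  let ?d = "dsum E x"
  have "{1..m} = insert m {1..<m}" using m by auto
  hence "?d m + (\<Sum>j\<in>{1..<m}. ?d j) = 0"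
    using dsum_total[OF _ E, of x] by simp
  moreover have "(\<Sum>j\<in>{1..<m}. tvec E c x j) = (\<Sum>j\<in>{1..<m}. ?d j) - of_int (\<Sum>j\<in>{1..<m}. \<lfloor>?d j / c\<rfloor>) * c"
    by (simp add: tvec_dsum rmod_def sum_subtractf sum_distrib_right)
  ultimately have eq: "- (\<Sum>j\<in>{1..<m}. tvec E c x j) = ?d m + of_int (\<Sum>j\<in>{1..<m}. \<lfloor>?d j / c\<rfloor>) * c"
    by linarith
  have "rmod (- (\<Sum>j\<in>{1..<m}. tvec E c x j)) c = rmod (?d m) c"
    by (simp only: eq rmod_add_int[OF c])
  thus ?thesis unfolding tvec_dsum[of E c x m] by (rule sym)
qed

theorem lemma1:
  fixes M :: "'w measure" and m :: nat and a :: real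
    and E :: "(nat \<times> nat) set" and r :: "nat \<times> nat \<Rightarrow> 'w \<Rightarrow> real"
  assumes "prob_space M"
    and "m \<ge> 1" and "a > 0"
    and "E \<subseteq> {1..m} \<times> {1..m}"
    and "prob_space.indep_vars M (\<lambda>_. borel) r E"
    and "\<And>e. e \<in> E \<Longrightarrow> distr M lborel (r e) = uniform_measure lborel {0..<real m * a}"
    and "undirected_connected {1..m} E"
  shows "distr M (PiM {1..m} (\<lambda>_. borel))
           (\<lambda>\<omega>. \<lambda>i\<in>{1..m}. tvec E (real m * a) (\<lambda>e. r e \<omega>) i)
         = zero_sum_uniform m (real m * a)"
proof -
  interpret P: prob_space M by fact
  define c where "c = real m * a"
  have c: "c > 0" using assms(2,3) by (simp add: c_def)
  have finE: "finite E" using assms(4) finite_subset[of E "{1..m} \<times> {1..m}"] by auto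
  have rv: "r e \<in> borel_measurable M" if "e \<in> E" for e
    using assms(5) that unfolding P.indep_vars_def by auto
  define R where "R = (\<lambda>\<omega>. \<lambda>e\<in>E. r e \<omega>)"
  have R_m: "R \<in> measurable M (PiM E (\<lambda>_. borel))"
    unfolding R_def by (intro measurable_restrict rv)
  have distR: "distr M (PiM E (\<lambda>_. borel)) R = PiM E (\<lambda>_. unif c)"
  proof (cases "E = {}")
    case True
    show ?thesis unfolding R_def True by (rule distr_PiM_empty[OF assms(1)])
  next
    case False
    have "distr M (PiM E (\<lambda>_. borel)) R = PiM E (\<lambda>e. distr M borel (r e))"
      using P.indep_vars_iff_distr_eq_PiM'[where I=E and X=r and M'="\<lambda>_. borel"] False rv assms(5)
      unfolding R_def by simp
    also have "\<dots> = PiM E (\<lambda>_. unif c)"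
    proof (rule PiM_cong[OF refl])
      fix e assume e: "e \<in> E"
      have "distr M borel (r e) = distr M lborel (r e)" by (rule distr_cong) auto
      also have "\<dots> = unif c" using assms(6)[OF e] by (simp add: c_def)
      finally show "distr M borel (r e) = unif c" .
    qed
    finally show ?thesis .
  qed
  define \<Phi> where "\<Phi> = (\<lambda>x. \<lambda>i\<in>{1..m}. tvec E c x i)"
  define \<Phi>' where "\<Phi>' = (\<lambda>x. \<lambda>i\<in>{1..<m}. tvec E c x i)"
  define \<Psi> where "\<Psi> = (\<lambda>x. \<lambda>i\<in>{1..m}. if i < m then x i else rmod (- (\<Sum>j\<in>{1..<m}. x j)) c)"
  have Phi_m: "\<Phi> \<in> measurable (PiM E (\<lambda>_. borel)) (PiM {1..m} (\<lambda>_. borel))"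
    unfolding \<Phi>_def by (intro measurable_restrict tvec_meas) simp
  have Phi'_m: "\<Phi>' \<in> measurable (PiM E (\<lambda>_. unif c)) (PiM {1..<m} (\<lambda>_. borel))"
    unfolding \<Phi>'_def by (intro measurable_restrict tvec_meas) simp
  have Psi_m: "\<Psi> \<in> measurable (PiM {1..<m} (\<lambda>_. borel)) (PiM {1..m} (\<lambda>_. borel))"
    unfolding \<Psi>_def
  proof (intro measurable_restrict)
    fix i assume i: "i \<in> {1..m}"
    have comp: "(\<lambda>x. x j) \<in> borel_measurable (PiM {1..<m} (\<lambda>_. borel))" if "j \<in> {1..<m}" for j
      by (rule measurable_component_singleton[OF that])
    show "(\<lambda>x. if i < m then x i else rmod (- (\<Sum>j\<in>{1..<m}. x j)) c) \<in> borel_measurable (PiM {1..<m} (\<lambda>_. borel))"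
    proof (cases "i < m")
      case True thus ?thesis using i comp[of i] by simp
    next
      case False thus ?thesis
        using comp by simp
    qed
  qed
  have PsiPhi: "\<Phi> = \<Psi> \<circ> \<Phi>'"
  proof (rule ext)+
    fix x i
    show "\<Phi> x i = (\<Psi> \<circ> \<Phi>') x i"
      using tvec_last[OF c assms(2,4), of x]
      by (auto simp: \<Phi>_def \<Psi>_def \<Phi>'_def)
  qed
  have Qc: "Qc {1..<m} E"
  proof -
    have "Qc ({1..m} - {m}) E" by (rule conn_Qc[OF assms(4,7)]) (use assms(2) in auto)
    moreover have "{1..m} - {m} = {1..<m}" by auto
    ultimately show ?thesis by simp
  qed
  have eq1: "(\<lambda>\<omega>. \<lambda>i\<in>{1..m}. tvec E c (\<lambda>e. r e \<omega>) i) = \<Phi> \<circ> R"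
  proof (rule ext)
    fix \<omega>
    have "tvec E c (\<lambda>e. r e \<omega>) i = tvec E c (R \<omega>) i" for i
      unfolding tvec_dsum by (subst dsum_cong[of E _ "R \<omega>"]) (auto simp: R_def)
    thus "(\<lambda>i\<in>{1..m}. tvec E c (\<lambda>e. r e \<omega>) i) = (\<Phi> \<circ> R) \<omega>"
      by (simp add: \<Phi>_def)
  qed
  have "distr M (PiM {1..m} (\<lambda>_. borel)) (\<lambda>\<omega>. \<lambda>i\<in>{1..m}. tvec E c (\<lambda>e. r e \<omega>) i)
      = distr (distr M (PiM E (\<lambda>_. borel)) R) (PiM {1..m} (\<lambda>_. borel)) \<Phi>"
    unfolding eq1 by (rule distr_distr[OF Phi_m R_m, symmetric])
  also have "\<dots> = distr (PiM E (\<lambda>_. unif c)) (PiM {1..m} (\<lambda>_. borel)) (\<Psi> \<circ> \<Phi>')"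
    unfolding distR PsiPhi ..
  also have "\<dots> = distr (distr (PiM E (\<lambda>_. unif c)) (PiM {1..<m} (\<lambda>_. borel)) \<Phi>') (PiM {1..m} (\<lambda>_. borel)) \<Psi>"
    by (rule distr_distr[OF Psi_m Phi'_m, symmetric])
  also have "distr (PiM E (\<lambda>_. unif c)) (PiM {1..<m} (\<lambda>_. borel)) \<Phi>' = PiM {1..<m} (\<lambda>_. unif c)"
    unfolding \<Phi>'_def by (rule main[OF c _ finE Qc]) simp
  also have "distr (PiM {1..<m} (\<lambda>_. unif c)) (PiM {1..m} (\<lambda>_. borel)) \<Psi> = zero_sum_uniform m c"
    unfolding zero_sum_uniform_def \<Psi>_def ..
  finally show ?thesis unfolding c_def .
qed

end
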